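(* Let $\mathscr H$ be a real Hilbert space, $\mathscr A\subseteq\mathscr H$ a closed linear subspace, $\mathsf Z$ a countable index set, $(h_k)_{k\in\mathsf Z}$ an orthogonal family of nonzero vectors with $P_{\mathscr A}h_k\neq 0$ for all $k$, and $\mathbf s=(\mathrm s_k)$ a real sequence with $(\mathrm s_k/\|h_k\|)_k\in\ell^2(\mathsf Z)$. For $k\in\mathsf Z$ let $P_k$ be the orthogonal projection onto $\mathscr S_k:=\{v\in\mathscr A:\langle v,h_k\rangle=\mathrm s_k\}$, and set $\mu_k:=\|P_{\mathscr A}h_k\|^2/\|h_k\|^2$. Then $\mu_k\in(0,1]$ for every $k$, and for every $u\in\mathscr A$, $$P_{\mathscr A}P_{\mathscr C_{\mathbf s}}u=u+\sum_{k\in\mathsf Z}\mu_k\,(P_k u-u),$$ where $\mathscr C_{\mathbf s}:=\{v\in\mathscr H:\langle v,h_k\rangle=\mathrm s_k\ \forall k\in\mathsf Z\}$.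
   Context: $P_{\mathscr V}$ denotes orthogonal projection (nearest-point map) onto a nonempty closed affine subspace $\mathscr V$ of $\mathscr H$. *)

theory Defs
  imports "HOL-Analysis.Analysis"
begin

text \<open>The library's closest_point requires
  heine_borel, which excludes infinite-dimensional Hilbert spaces, so we use the same
  definition for arbitrary real inner product spaces.\<close>
definition proj :: "'a::real_inner set \<Rightarrow> 'a \<Rightarrow> 'a" where
  "proj S a = (SOME x. x \<in> S \<and> (\<forall>y\<in>S. dist a x \<le> dist a y))"

end

theory Submission
  imports Defs
begin

lemma norm_diff_expand:
  fixes a x y :: "'a::real_inner"
  shows "(norm (a - y))\<^sup>2 = (norm (a - x))\<^sup>2 + (norm (y - x))\<^sup>2 - 2 * ((a - x) \<bullet> (y - x))"
  unfolding power2_norm_eq_inner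
  by (simp add: inner_diff_left inner_diff_right inner_commute algebra_simps)

lemma proj_eqI:
  fixes S :: "'a::real_inner set"
  assumes "x \<in> S" "\<And>y. y \<in> S \<Longrightarrow> (a - x) \<bullet> (y - x) = 0"
  shows "proj S a = x"
  unfolding proj_def
proof (rule some_equality)
  show "x \<in> S \<and> (\<forall>y\<in>S. dist a x \<le> dist a y)"
  proof (intro conjI ballI)
    fix y assume "y \<in> S"
    have "(dist a x)\<^sup>2 \<le> (dist a y)\<^sup>2"
      using norm_diff_expand[of a y x] assms(2)[OF \<open>y \<in> S\<close>] by (simp add: dist_norm)
    then show "dist a x \<le> dist a y" by (rule power2_le_imp_le) simp
  qed (rule assms(1))
next
  fix x' assume x': "x' \<in> S \<and> (\<forall>y\<in>S. dist a x' \<le> dist a y)"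
  then have "dist a x' \<le> dist a x" using assms(1) by blast
  then have "(norm (a - x'))\<^sup>2 \<le> (norm (a - x))\<^sup>2"
    unfolding dist_norm by (rule power_mono) simp
  moreover have "(norm (a - x'))\<^sup>2 = (norm (a - x))\<^sup>2 + (norm (x' - x))\<^sup>2"
    using norm_diff_expand[of a x' x] assms(2) x' by simp
  ultimately have "(norm (x' - x))\<^sup>2 \<le> 0" by simp
  then show "x' = x" by simp
qed

lemma par_law:
  fixes x y :: "'a::real_inner"
  shows "(norm (x - y))\<^sup>2 + (norm (x + y))\<^sup>2 = 2 * (norm x)\<^sup>2 + 2 * (norm y)\<^sup>2"
  by (simp add: power2_norm_eq_inner inner_diff_left inner_diff_right inner_add_left inner_add_right inner_commute)
lemma line_expand:
  fixes w z :: "'a::real_inner"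
  shows "(norm (w - t *\<^sub>R z))\<^sup>2 = (norm w)\<^sup>2 - 2 * t * (w \<bullet> z) + t\<^sup>2 * (norm z)\<^sup>2"
proof -
  have "(norm (w - t *\<^sub>R z))\<^sup>2 = (w - t *\<^sub>R z) \<bullet> (w - t *\<^sub>R z)" by (simp add: power2_norm_eq_inner)
  also have "\<dots> = w \<bullet> w - 2 * t * (w \<bullet> z) + t\<^sup>2 * (z \<bullet> z)"
    by (simp add: inner_diff_left inner_diff_right inner_commute power2_eq_square algebra_simps)
  also have "\<dots> = (norm w)\<^sup>2 - 2 * t * (w \<bullet> z) + t\<^sup>2 * (norm z)\<^sup>2" by (simp add: power2_norm_eq_inner)
  finally show ?thesis .
qed

lemma hilbert_proj_exists:
  fixes A :: "'a::{real_inner,complete_space} set"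
  assumes sub: "subspace A" and cl: "closed A"
  shows "\<exists>x\<in>A. \<forall>y\<in>A. (a - x) \<bullet> y = 0"
proof -
  define D where "D = (\<lambda>y. (norm (a - y))\<^sup>2) ` A"
  define d where "d = Inf D"
  have ne: "D \<noteq> {}" using subspace_0[OF sub] by (auto simp: D_def)
  have bb: "bdd_below D" unfolding D_def by (rule bdd_belowI[of _ 0]) auto
  have dle: "d \<le> (norm (a - y))\<^sup>2" if "y \<in> A" for y
    unfolding d_def using bb that by (auto simp: D_def intro!: cInf_lower)
  have "\<exists>y\<in>A. (norm (a - y))\<^sup>2 < d + 1 / (real n + 1)" for n
  proof -
    have "Inf D < d + 1 / (real n + 1)" unfolding d_def by simp
    then obtain t where "t \<in> D" "t < d + 1 / (real n + 1)"
      using cInf_lessD[OF ne] by blast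
    then show ?thesis by (auto simp: D_def)
  qed
  then have "\<forall>n. \<exists>y. y \<in> A \<and> (norm (a - y))\<^sup>2 < d + 1 / (real n + 1)" by blast
  then have "\<exists>y. \<forall>n. y n \<in> A \<and> (norm (a - y n))\<^sup>2 < d + 1 / (real n + 1)" by (rule choice)
  then obtain y where yA: "\<And>n. y n \<in> A" and yd: "\<And>n. (norm (a - y n))\<^sup>2 < d + 1 / (real n + 1)"
    by blast
  have mid: "(norm (y n - y m))\<^sup>2 \<le> 2 / (real n + 1) + 2 / (real m + 1)" for n m
  proof -
    have e1: "(a - y n) - (a - y m) = y m - y n" by simp
    have e2: "(a - y n) + (a - y m) = 2 *\<^sub>R (a - (1/2) *\<^sub>R (y n + y m))"
      by (simp add: algebra_simps scaleR_2)
    have n2: "(norm (2 *\<^sub>R (a - (1/2) *\<^sub>R (y n + y m))))\<^sup>2 = 4 * (norm (a - (1/2) *\<^sub>R (y n + y m)))\<^sup>2"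
      by (simp add: power2_eq_square)
    have par: "(norm (y n - y m))\<^sup>2 = 2 * (norm (a - y n))\<^sup>2 + 2 * (norm (a - y m))\<^sup>2
               - 4 * (norm (a - (1/2) *\<^sub>R (y n + y m)))\<^sup>2"
      using par_law[of "a - y n" "a - y m"] unfolding e1 e2 n2 by (simp add: norm_minus_commute)
    have "(1/2) *\<^sub>R (y n + y m) \<in> A"
      using sub yA by (simp add: subspace_add subspace_mul)
    then have "d \<le> (norm (a - (1/2) *\<^sub>R (y n + y m)))\<^sup>2" by (rule dle)
    then show ?thesis using par yd[of n] yd[of m] by linarith
  qed
  have "Cauchy y"
  proof (rule metric_CauchyI)
    fix e :: real assume "e > 0"
    obtain N :: nat where N: "4 / e\<^sup>2 < real N" using reals_Archimedean2 by blast
    have e2: "e\<^sup>2 > 0" using \<open>e > 0\<close> by simp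
    have "4 < real N * e\<^sup>2" using N e2 by (simp add: field_simps)
    then have "4 < (real N + 1) * e\<^sup>2" using e2 by (simp only: distrib_right mult_1_left)
    then have "4 / (real N + 1) < e\<^sup>2" by (subst pos_divide_less_eq) (simp_all add: mult.commute)
    show "\<exists>M. \<forall>m\<ge>M. \<forall>n\<ge>M. dist (y m) (y n) < e"
    proof (intro exI allI impI)
      fix m n assume "N \<le> m" "N \<le> n"
      have "2 / (real m + 1) \<le> 2 / (real N + 1)" "2 / (real n + 1) \<le> 2 / (real N + 1)"
        using \<open>N \<le> m\<close> \<open>N \<le> n\<close> by (simp_all add: frac_le)
      then have "(dist (y m) (y n))\<^sup>2 < e\<^sup>2"
        using mid[of m n] \<open>4 / (real N + 1) < e\<^sup>2\<close> by (simp add: dist_norm)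
      then show "dist (y m) (y n) < e"
        using \<open>e > 0\<close> by (meson power_less_imp_less_base less_le_not_le zero_le_dist)
    qed
  qed
  then obtain x where lim: "y \<longlonglongrightarrow> x" using Cauchy_convergent_iff convergent_def by blast
  have xA: "x \<in> A" using closed_sequentially[OF cl] yA lim by blast
  have l1: "(\<lambda>n. (norm (a - y n))\<^sup>2) \<longlonglongrightarrow> (norm (a - x))\<^sup>2"
    by (intro tendsto_intros lim)
  have l2: "(\<lambda>n. d + 1 / (real n + 1)) \<longlonglongrightarrow> d + 0"
    using LIMSEQ_inverse_real_of_nat by (intro tendsto_intros) (simp add: inverse_eq_divide add.commute)
  have xd: "(norm (a - x))\<^sup>2 \<le> d"
    using LIMSEQ_le[OF l1 l2] yd less_imp_le by auto
  show ?thesis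
  proof (intro bexI[OF _ xA] ballI)
    fix z assume zA: "z \<in> A"
    define p where "p = (a - x) \<bullet> z"
    define q where "q = (norm z)\<^sup>2"
    have key: "0 \<le> - 2 * t * p + t\<^sup>2 * q" for t
    proof -
      have "x + t *\<^sub>R z \<in> A" using sub xA zA by (simp add: subspace_add subspace_mul)
      then have "d \<le> (norm (a - (x + t *\<^sub>R z)))\<^sup>2" by (rule dle)
      also have "\<dots> = (norm (a - x))\<^sup>2 - 2 * t * p + t\<^sup>2 * q"
        using line_expand[of "a - x" t z] by (simp add: p_def q_def algebra_simps)
      finally show ?thesis using xd by linarith
    qed
    show "(a - x) \<bullet> z = 0"
    proof (cases "q = 0")
      case True
      then have "z = 0" by (simp add: q_def)
      then show ?thesis by simp
    next
      case False
      then have qp: "q > 0" by (simp add: q_def)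
      have "0 \<le> - 2 * (p/q) * p + (p/q)\<^sup>2 * q" by (rule key)
      also have "\<dots> = - (p\<^sup>2 / q)" using qp by (simp add: field_simps power2_eq_square)
      finally have "p\<^sup>2 / q \<le> 0" by simp
      then have "p\<^sup>2 \<le> 0" using qp by (simp add: divide_le_0_iff)
      then show ?thesis by (simp add: p_def)
    qed
  qed
qed


lemma orth_series_summable:
  fixes g :: "'i \<Rightarrow> 'a::{real_inner,complete_space}"
  assumes orth: "\<And>j k. j \<in> Z \<Longrightarrow> k \<in> Z \<Longrightarrow> j \<noteq> k \<Longrightarrow> g j \<bullet> g k = 0"
    and sq: "(\<lambda>k. (norm (g k))\<^sup>2) summable_on Z"
  shows "g summable_on Z"
proof -
  define n where "n = (\<lambda>k. (norm (g k))\<^sup>2)"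
  from sq obtain L where lim: "(sum n \<longlongrightarrow> L) (finite_subsets_at_top Z)"
    unfolding has_sum_def summable_on_def n_def by blast
  have pyth: "(norm (sum g F))\<^sup>2 = sum n F" if "finite F" "F \<subseteq> Z" for F
    unfolding n_def
  proof (rule norm_sum_Pythagorean[OF that(1)])
    show "pairwise (\<lambda>i j. orthogonal (g i) (g j)) F"
      using orth that(2) by (auto simp: pairwise_def orthogonal_def)
  qed
  have "\<exists>P. eventually P (finite_subsets_at_top Z) \<and>
              (\<forall>F F'. P F \<and> P F' \<longrightarrow> dist (sum g F) (sum g F') < e)" if "e>0" for e
  proof -
    define d P where "d = (e/2)\<^sup>2 / 2" and "P F \<longleftrightarrow> finite F \<and> F \<subseteq> Z \<and> dist (sum n F) L < d" for F
    have "d > 0" unfolding d_def using that by simp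
    have ev_P: "eventually P (finite_subsets_at_top Z)"
      using lim
      by (auto simp add: P_def[abs_def] \<open>0 < d\<close> eventually_conj_iff eventually_finite_subsets_at_top_weakI tendsto_iff)
    moreover have "dist (sum g F1) (sum g F2) < e" if "P F1" and "P F2" for F1 F2
    proof -
      from ev_P
      obtain F' where "finite F'" and "F' \<subseteq> Z" and P_sup_F': "finite F \<and> F \<supseteq> F' \<and> F \<subseteq> Z \<Longrightarrow> P F" for F
        by atomize_elim (simp add: eventually_finite_subsets_at_top)
      define F where "F = F' \<union> F1 \<union> F2"
      have "finite F" and "F \<subseteq> Z"
        using F_def P_def[abs_def] that \<open>finite F'\<close> \<open>F' \<subseteq> Z\<close> by auto
      have dist_F: "dist (sum n F) L < d"
        by (metis F_def \<open>F \<subseteq> Z\<close> P_def P_sup_F' \<open>finite F\<close> le_supE order_refl)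
      have dist_F_subset: "dist (sum g F) (sum g G) < e/2" if G: "G \<subseteq> F" "P G" for G
      proof -
        have "dist (sum g F) (sum g G) = norm (sum g (F-G))"
          unfolding dist_norm using \<open>finite F\<close> G by (subst sum_diff) auto
        moreover have "(norm (sum g (F-G)))\<^sup>2 = sum n (F - G)"
          using pyth \<open>finite F\<close> \<open>F \<subseteq> Z\<close> by auto
        moreover have "sum n (F - G) = sum n F - sum n G"
          using \<open>finite F\<close> G by (subst sum_diff) auto
        moreover have "sum n F - sum n G < 2 * d"
          using dist_F G unfolding P_def dist_real_def by linarith
        ultimately have "(dist (sum g F) (sum g G))\<^sup>2 < (e/2)\<^sup>2"
          by (simp add: d_def)
        then show ?thesis
          by (rule power2_less_imp_less) (use \<open>e > 0\<close> in simp)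
      qed
      have "dist (sum g F1) (sum g F2) \<le> dist (sum g F) (sum g F1) + dist (sum g F) (sum g F2)"
        by (rule dist_triangle3)
      also have "\<dots> < e/2 + e/2"
        by (intro add_strict_mono dist_F_subset that) (auto simp: F_def)
      finally show ?thesis by simp
    qed
    ultimately show ?thesis by blast
  qed
  then have "cauchy_filter (filtermap (sum g) (finite_subsets_at_top Z))"
    by (simp add: cauchy_filter_metric_filtermap)
  moreover have "complete (UNIV::'a set)"
    by (meson Cauchy_convergent UNIV_I complete_def convergent_def)
  ultimately obtain L' where "(sum g \<longlongrightarrow> L') (finite_subsets_at_top Z)"
    using complete_uniform[where S=UNIV] by (force simp add: filterlim_def)
  then show ?thesis
    using summable_on_def has_sum_def by blast
qed

lemma bessel_summable:
  fixes h :: "'i \<Rightarrow> 'a::real_inner"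
  assumes orth: "\<And>j k. j \<in> Z \<Longrightarrow> k \<in> Z \<Longrightarrow> j \<noteq> k \<Longrightarrow> h j \<bullet> h k = 0"
    and nz: "\<And>k. k \<in> Z \<Longrightarrow> h k \<noteq> 0"
  shows "(\<lambda>k. (u \<bullet> h k / norm (h k))\<^sup>2) summable_on Z"
proof (rule nonneg_bdd_above_summable_on)
  show "bdd_above (sum (\<lambda>k. (u \<bullet> h k / norm (h k))\<^sup>2) ` {F. F \<subseteq> Z \<and> finite F})"
  proof (rule bdd_aboveI[of _ "(norm u)\<^sup>2"], clarify)
    fix F assume FZ: "F \<subseteq> Z" and fin: "finite F"
    define c where "c k = u \<bullet> h k / (norm (h k))\<^sup>2" for k
    define q where "q = (\<Sum>k\<in>F. c k *\<^sub>R h k)"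
    define S where "S = (\<Sum>k\<in>F. (u \<bullet> h k / norm (h k))\<^sup>2)"
    have t: "c k * (u \<bullet> h k) = (u \<bullet> h k / norm (h k))\<^sup>2" "(norm (c k *\<^sub>R h k))\<^sup>2 = (u \<bullet> h k / norm (h k))\<^sup>2"
      if "k \<in> F" for k
      using nz[of k] that FZ by (auto simp: c_def power2_eq_square field_simps)
    have uq: "u \<bullet> q = S"
      unfolding q_def S_def by (simp add: inner_sum_right t)
    have "(norm q)\<^sup>2 = (\<Sum>k\<in>F. (norm (c k *\<^sub>R h k))\<^sup>2)"
      unfolding q_def
    proof (rule norm_sum_Pythagorean[OF fin])
      show "pairwise (\<lambda>i j. orthogonal (c i *\<^sub>R h i) (c j *\<^sub>R h j)) F"
        using orth FZ by (auto simp: pairwise_def orthogonal_def)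
    qed
    moreover have "(\<Sum>k\<in>F. (norm (c k *\<^sub>R h k))\<^sup>2) = S"
      unfolding S_def by (rule sum.cong) (simp_all only: t)
    ultimately have qq: "(norm q)\<^sup>2 = S" by simp
    have "0 \<le> (norm (u - q))\<^sup>2" by simp
    also have "\<dots> = (norm u)\<^sup>2 - 2 * (u \<bullet> q) + (norm q)\<^sup>2"
      by (simp add: power2_norm_eq_inner inner_diff_left inner_diff_right inner_commute)
    finally show "(\<Sum>k\<in>F. (u \<bullet> h k / norm (h k))\<^sup>2) \<le> (norm u)\<^sup>2"
      using uq qq by (simp add: S_def)
  qed
qed simp


lemma proj_subspace:
  fixes A :: "'a::{real_inner,complete_space} set"
  assumes sub: "subspace A" and cl: "closed A"
  shows "proj A a \<in> A" "\<And>y. y \<in> A \<Longrightarrow> (a - proj A a) \<bullet> y = 0"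
proof -
  obtain x where xA: "x \<in> A" and xo: "\<And>y. y \<in> A \<Longrightarrow> (a - x) \<bullet> y = 0"
    using hilbert_proj_exists[OF sub cl, of a] by blast
  have "proj A a = x"
    by (rule proj_eqI[OF xA]) (intro xo subspace_diff[OF sub] xA)
  then show "proj A a \<in> A" "\<And>y. y \<in> A \<Longrightarrow> (a - proj A a) \<bullet> y = 0"
    using xA xo by auto
qed

lemma proj_subspace_linear:
  fixes A :: "'a::{real_inner,complete_space} set"
  assumes sub: "subspace A" and cl: "closed A"
  shows "bounded_linear (proj A)"
proof -
  note PA = proj_subspace(1)[OF sub cl] and Po = proj_subspace(2)[OF sub cl]
  have add: "proj A (a + b) = proj A a + proj A b" for a b
  proof (rule proj_eqI)
    show "proj A a + proj A b \<in> A" using PA sub by (simp add: subspace_add)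
    fix y assume "y \<in> A"
    then have yA: "y - (proj A a + proj A b) \<in> A"
      using PA sub by (simp add: subspace_add subspace_diff)
    have "(a + b - (proj A a + proj A b)) \<bullet> (y - (proj A a + proj A b))
        = (a - proj A a) \<bullet> (y - (proj A a + proj A b)) + (b - proj A b) \<bullet> (y - (proj A a + proj A b))"
      by (simp add: inner_add_left inner_diff_left algebra_simps)
    then show "(a + b - (proj A a + proj A b)) \<bullet> (y - (proj A a + proj A b)) = 0"
      using Po[OF yA, of a] Po[OF yA, of b] by simp
  qed
  have scale: "proj A (r *\<^sub>R a) = r *\<^sub>R proj A a" for r a
  proof (rule proj_eqI)
    show "r *\<^sub>R proj A a \<in> A" using PA sub by (simp add: subspace_mul)
    fix y assume "y \<in> A"
    then have yA: "y - r *\<^sub>R proj A a \<in> A"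
      using PA sub by (simp add: subspace_mul subspace_diff)
    have "(r *\<^sub>R a - r *\<^sub>R proj A a) \<bullet> (y - r *\<^sub>R proj A a) = r * ((a - proj A a) \<bullet> (y - r *\<^sub>R proj A a))"
      by (simp add: scaleR_diff_right[symmetric])
    then show "(r *\<^sub>R a - r *\<^sub>R proj A a) \<bullet> (y - r *\<^sub>R proj A a) = 0"
      using Po[OF yA, of a] by simp
  qed
  have nrm: "norm (proj A a) \<le> norm a * 1" for a
  proof -
    have "orthogonal (proj A a) (a - proj A a)"
      using Po[OF PA, of a] by (simp add: orthogonal_def inner_commute)
    then have "(norm (proj A a + (a - proj A a)))\<^sup>2 = (norm (proj A a))\<^sup>2 + (norm (a - proj A a))\<^sup>2"
      by (rule norm_add_Pythagorean)
    then have "(norm (proj A a))\<^sup>2 \<le> (norm a)\<^sup>2" by simp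
    then have "norm (proj A a) \<le> norm a" by (rule power2_le_imp_le) simp
    then show ?thesis by simp
  qed
  show ?thesis by (rule bounded_linear_intro[OF add scale nrm])
qed

theorem mainTheorem4:
  fixes A :: "'a::{real_inner,complete_space} set"
    and Z :: "'i set"
    and h :: "'i \<Rightarrow> 'a"
    and s :: "'i \<Rightarrow> real"
  assumes "subspace A" and "closed A"
    and "countable Z"
    and "\<forall>j\<in>Z. \<forall>k\<in>Z. j \<noteq> k \<longrightarrow> h j \<bullet> h k = 0"
    and "\<forall>k\<in>Z. h k \<noteq> 0"
    and "\<forall>k\<in>Z. proj A (h k) \<noteq> 0"
    and "(\<lambda>k. (s k / norm (h k))\<^sup>2) summable_on Z"
  shows "(\<forall>k\<in>Z. 0 < (norm (proj A (h k)))\<^sup>2 / (norm (h k))\<^sup>2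
                 \<and> (norm (proj A (h k)))\<^sup>2 / (norm (h k))\<^sup>2 \<le> 1)
    \<and> (\<forall>u\<in>A.
           ((\<lambda>k. ((norm (proj A (h k)))\<^sup>2 / (norm (h k))\<^sup>2)
                   *\<^sub>R (proj {v\<in>A. v \<bullet> h k = s k} u - u))
            has_sum (proj A (proj {v. \<forall>k\<in>Z. v \<bullet> h k = s k} u) - u)) Z)"
proof -
  note sub = assms(1) and cl = assms(2)
  have orth: "\<And>j k. j \<in> Z \<Longrightarrow> k \<in> Z \<Longrightarrow> j \<noteq> k \<Longrightarrow> h j \<bullet> h k = 0" using assms(4) by blast
  have nz: "\<And>k. k \<in> Z \<Longrightarrow> h k \<noteq> 0" using assms(5) by blast
  have pnz: "\<And>k. k \<in> Z \<Longrightarrow> proj A (h k) \<noteq> 0" using assms(6) by blast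
  note PA = proj_subspace(1)[OF sub cl] and Po = proj_subspace(2)[OF sub cl]
  note blP = proj_subspace_linear[OF sub cl]
  have Pid: "proj A u = u" if "u \<in> A" for u
    by (rule proj_eqI[OF that]) simp
  have hp: "h k \<bullet> proj A (h k) = (norm (proj A (h k)))\<^sup>2" for k
  proof -
    have "(h k - proj A (h k)) \<bullet> proj A (h k) = 0" by (rule Po[OF PA])
    then show ?thesis by (simp add: inner_diff_left power2_norm_eq_inner)
  qed
  have part1: "0 < (norm (proj A (h k)))\<^sup>2 / (norm (h k))\<^sup>2
                 \<and> (norm (proj A (h k)))\<^sup>2 / (norm (h k))\<^sup>2 \<le> 1" if "k \<in> Z" for k
  proof -
    have "orthogonal (proj A (h k)) (h k - proj A (h k))"
      using Po[OF PA, of "h k"] by (simp add: orthogonal_def inner_commute)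
    then have "(norm (proj A (h k) + (h k - proj A (h k))))\<^sup>2
        = (norm (proj A (h k)))\<^sup>2 + (norm (h k - proj A (h k)))\<^sup>2"
      by (rule norm_add_Pythagorean)
    then have le: "(norm (proj A (h k)))\<^sup>2 \<le> (norm (h k))\<^sup>2" by simp
    have "0 < (norm (proj A (h k)))\<^sup>2" using pnz[OF that] by simp
    moreover have "0 < (norm (h k))\<^sup>2" using nz[OF that] by simp
    ultimately show ?thesis using le by simp
  qed
  have part2: "((\<lambda>k. ((norm (proj A (h k)))\<^sup>2 / (norm (h k))\<^sup>2)
                   *\<^sub>R (proj {v\<in>A. v \<bullet> h k = s k} u - u))
            has_sum (proj A (proj {v. \<forall>k\<in>Z. v \<bullet> h k = s k} u) - u)) Z" if uA: "u \<in> A" for u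
  proof -
    define c where "c k = (s k - u \<bullet> h k) / (norm (h k))\<^sup>2" for k
    define g where "g k = c k *\<^sub>R h k" for k
    have sq_le: "(a - b)\<^sup>2 \<le> 2 * a\<^sup>2 + 2 * b\<^sup>2" for a b :: real
    proof -
      have "2 * a\<^sup>2 + 2 * b\<^sup>2 - (a - b)\<^sup>2 = (a + b)\<^sup>2" by (simp add: power2_eq_square algebra_simps)
      then show ?thesis using zero_le_power2[of "a + b"] by linarith
    qed
    have gsq: "(\<lambda>k. (norm (g k))\<^sup>2) summable_on Z"
    proof (rule summable_on_comparison_test)
      show "(\<lambda>k. 2 * (s k / norm (h k))\<^sup>2 + 2 * (u \<bullet> h k / norm (h k))\<^sup>2) summable_on Z"
        by (intro summable_on_add summable_on_cmult_right assms(7) bessel_summable[OF orth nz]) auto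
      fix k assume "k \<in> Z"
      have "(norm (g k))\<^sup>2 = (s k / norm (h k) - u \<bullet> h k / norm (h k))\<^sup>2"
        using nz[OF \<open>k \<in> Z\<close>] by (simp add: g_def c_def power2_eq_square field_simps)
      then show "(norm (g k))\<^sup>2 \<le> 2 * (s k / norm (h k))\<^sup>2 + 2 * (u \<bullet> h k / norm (h k))\<^sup>2"
        using sq_le by simp
    qed simp
    have gorth: "g j \<bullet> g k = 0" if "j \<in> Z" "k \<in> Z" "j \<noteq> k" for j k
      using orth[OF that] by (simp add: g_def)
    obtain w where gw: "(g has_sum w) Z"
      using orth_series_summable[OF gorth gsq] summable_on_def by blast
    have wh: "w \<bullet> h j = s j - u \<bullet> h j" if jZ: "j \<in> Z" for j
    proof -
      have 1: "((\<lambda>k. g k \<bullet> h j) has_sum w \<bullet> h j) Z"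
        by (rule has_sum_bounded_linear[OF bounded_linear_inner_left gw])
      have 2: "((\<lambda>k. g k \<bullet> h j) has_sum (s j - u \<bullet> h j)) Z"
      proof (rule has_sum_finite_neutralI[of "{j}"])
        show "\<And>x. x \<in> Z - {j} \<Longrightarrow> g x \<bullet> h j = 0" using gorth orth jZ by (auto simp: g_def)
        show "s j - u \<bullet> h j = (\<Sum>x\<in>{j}. g x \<bullet> h j)"
          using nz[OF jZ] by (simp add: g_def c_def power2_norm_eq_inner)
      qed (use jZ in auto)
      show ?thesis using has_sum_unique[OF 1 2] .
    qed
    define C where "C = {v. \<forall>k\<in>Z. v \<bullet> h k = s k}"
    have vC: "u + w \<in> C" unfolding C_def using wh by (simp add: inner_add_left)
    have PC: "proj C u = u + w"
    proof (rule proj_eqI[OF vC])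
      fix y assume "y \<in> C"
      have 1: "((\<lambda>k. g k \<bullet> (y - (u + w))) has_sum w \<bullet> (y - (u + w))) Z"
        by (rule has_sum_bounded_linear[OF bounded_linear_inner_left gw])
      have "g k \<bullet> (y - (u + w)) = 0" if "k \<in> Z" for k
        using \<open>y \<in> C\<close> vC that unfolding C_def
        by (simp add: g_def inner_diff_right inner_commute[of "h k"])
      then have 2: "((\<lambda>k. g k \<bullet> (y - (u + w))) has_sum 0) Z"
        by (simp add: has_sum_0)
      have "w \<bullet> (y - (u + w)) = 0" using has_sum_unique[OF 1 2] .
      then show "(u - (u + w)) \<bullet> (y - (u + w)) = 0" by simp
    qed
    have target: "proj A (proj C u) - u = proj A w"
      using PC Pid[OF uA] linear_add[OF bounded_linear.linear[OF blP]] by simp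
    have Pg: "((\<lambda>k. proj A (g k)) has_sum proj A w) Z"
      by (rule has_sum_bounded_linear[OF blP gw])
    have trm: "((norm (proj A (h k)))\<^sup>2 / (norm (h k))\<^sup>2) *\<^sub>R (proj {v\<in>A. v \<bullet> h k = s k} u - u)
        = proj A (g k)" if kZ: "k \<in> Z" for k
    proof -
      define p where "p = proj A (h k)"
      define d where "d = s k - u \<bullet> h k"
      have np: "(norm p)\<^sup>2 \<noteq> 0" using pnz[OF kZ] by (simp add: p_def)
      have pA: "p \<in> A" by (simp add: p_def PA)
      have hpp: "h k \<bullet> p = (norm p)\<^sup>2" by (simp add: p_def hp)
      have Sk: "proj {v\<in>A. v \<bullet> h k = s k} u = u + (d / (norm p)\<^sup>2) *\<^sub>R p"
      proof (rule proj_eqI)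
        show "u + (d / (norm p)\<^sup>2) *\<^sub>R p \<in> {v\<in>A. v \<bullet> h k = s k}"
          using uA pA sub np hpp
          by (simp add: subspace_add subspace_mul inner_add_left inner_commute[of p] d_def)
        fix y assume y: "y \<in> {v\<in>A. v \<bullet> h k = s k}"
        define x where "x = u + (d / (norm p)\<^sup>2) *\<^sub>R p"
        have xA: "x \<in> A" using uA pA sub by (simp add: x_def subspace_add subspace_mul)
        have xh: "x \<bullet> h k = s k"
          using np hpp by (simp add: x_def inner_add_left inner_commute[of p] d_def)
        have yxA: "y - x \<in> A" using y xA sub by (simp add: subspace_diff)
        have "p \<bullet> (y - x) = h k \<bullet> (y - x) - (h k - p) \<bullet> (y - x)"
          by (simp add: inner_diff_left)
        also have "(h k - p) \<bullet> (y - x) = 0" unfolding p_def by (rule Po[OF yxA])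
        also have "h k \<bullet> (y - x) = 0" using y xh by (simp add: inner_diff_right inner_commute[of "h k"])
        finally have py: "p \<bullet> (y - x) = 0" by simp
        have ux: "u - x = - ((d / (norm p)\<^sup>2) *\<^sub>R p)" by (simp add: x_def)
        show "(u - (u + (d / (norm p)\<^sup>2) *\<^sub>R p)) \<bullet> (y - (u + (d / (norm p)\<^sup>2) *\<^sub>R p)) = 0"
          unfolding x_def[symmetric] ux using py by simp
      qed
      have "proj A (g k) = c k *\<^sub>R p"
        by (simp add: g_def p_def linear_scale[OF bounded_linear.linear[OF blP]])
      moreover have "((norm p)\<^sup>2 / (norm (h k))\<^sup>2) *\<^sub>R ((d / (norm p)\<^sup>2) *\<^sub>R p) = c k *\<^sub>R p"
        using np by (simp add: c_def d_def)
      ultimately show ?thesis using Sk by (simp add: p_def)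
    qed
    show ?thesis
      unfolding C_def[symmetric] target
      using Pg by (rule has_sum_cong[THEN iffD2, rotated]) (simp add: trm)
  qed
  show ?thesis using part1 part2 by blast
qed

end
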